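(* Let $2<p<\frac{10}{3}$, $\lambda_3<0$, and assume $\Lambda>0$. For every $a>0$, the function $r\mapsto g(a,r)$ on $(0,+\infty)$, where $$g(a,r):=\frac12-\frac{\Lambda}{2}C_4^4\,r\,a-\frac{2|\lambda_3|}{p}C_p^p\,a^{p(1-\gamma_p)}r^{p\gamma_p-2},$$ has a unique global maximum point. Moreover, $\max_{r>0}g(a,r)>0$ if $a<\bar a$, $=0$ if $a=\bar a$, and $<0$ if $a>\bar a$, where $\bar a:=\left(\frac{1}{2\alpha}\right)^{3/4}$ and $$\alpha:=\frac12(\Lambda C_4^4)^{\frac{p\gamma_p-2}{p\gamma_p-3}}\left(\frac{4|\lambda_3|(2-p\gamma_p)C_p^p}{p}\right)^{\frac{1}{3-p\gamma_p}}+2\left(\frac{C_p^p|\lambda_3|}{p}\right)^{\frac{1}{3-p\gamma_p}}\left(\frac{4(2-p\gamma_p)}{\Lambda C_4^4}\right)^{\frac{p\gamma_p-2}{3-p\gamma_p}}.$$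
   Context: $\Lambda:=\max\{|\lambda_1-\frac{4\pi}{3}\lambda_2|,|\lambda_1+\frac{8\pi}{3}\lambda_2|\}$ for given real parameters $\lambda_1,\lambda_2$. For $q\in(2,6)$, $\gamma_q:=\frac{3(q-2)}{2q}$ and $C_q>0$ is a constant in the Gagliardo–Nirenberg inequality $\|u\|_q\le C_q\|\nabla u\|_2^{\gamma_q}\|u\|_2^{1-\gamma_q}$ for all $u\in H^1(\mathbb{R}^3)$. *)

theory Defs
  imports "HOL-Analysis.Analysis"
begin

definition Lam :: "real \<Rightarrow> real \<Rightarrow> real" where
  "Lam l1 l2 = max \<bar>l1 - 4 * pi / 3 * l2\<bar> \<bar>l1 + 8 * pi / 3 * l2\<bar>"

definition gam :: "real \<Rightarrow> real" where
  "gam q = 3 * (q - 2) / (2 * q)"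

definition gfun :: "real \<Rightarrow> real \<Rightarrow> real \<Rightarrow> real \<Rightarrow> real \<Rightarrow> real \<Rightarrow> real \<Rightarrow> real" where
  "gfun L C4 Cp l3 p a r =
     1/2 - L / 2 * C4 ^ 4 * r * a
     - 2 * \<bar>l3\<bar> / p * (Cp powr p) * a powr (p * (1 - gam p)) * r powr (p * gam p - 2)"

definition alpha :: "real \<Rightarrow> real \<Rightarrow> real \<Rightarrow> real \<Rightarrow> real \<Rightarrow> real" where
  "alpha L C4 Cp l3 p =
     1/2 * (L * C4 ^ 4) powr ((p * gam p - 2) / (p * gam p - 3))
       * (4 * \<bar>l3\<bar> * (2 - p * gam p) * Cp powr p / p) powr (1 / (3 - p * gam p))
     + 2 * (Cp powr p * \<bar>l3\<bar> / p) powr (1 / (3 - p * gam p))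
       * (4 * (2 - p * gam p) / (L * C4 ^ 4)) powr ((p * gam p - 2) / (3 - p * gam p))"

definition abar :: "real \<Rightarrow> real \<Rightarrow> real \<Rightarrow> real \<Rightarrow> real \<Rightarrow> real" where
  "abar L C4 Cp l3 p = (1 / (2 * alpha L C4 Cp l3 p)) powr (3/4)"

end

theory Submission
  imports Defs
begin

lemma bern_strict:
  fixes m x :: real
  assumes m: "m > 0" and x: "x > 0" "x \<noteq> 1"
  shows "x powr (-m) > 1 - m * (x - 1)"
proof -
  have D: "\<And>y. y > 0 \<Longrightarrow> ((\<lambda>y. y powr (-m)) has_real_derivative (-m) * y powr (-m - 1)) (at y)"
    by (auto intro!: derivative_eq_intros)
  show ?thesis
  proof (cases "x < 1")
    case True
    obtain z where z: "x < z" "z < 1" "1 powr (-m) - x powr (-m) = (1 - x) * ((-m) * z powr (-m - 1))"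
      using MVT2[of x 1 "\<lambda>y. y powr (-m)" "\<lambda>y. (-m) * y powr (-m - 1)"] True x D by force
    have "z powr (-m - 1) > 1"
      using z x m powr_less_mono2_neg[of "-m-1" z 1] by simp 
    then have "(1 - x) * (m * z powr (-m - 1)) > (1 - x) * m" using True m by simp
    then show ?thesis using z by (simp add: algebra_simps)
  next
    case False
    then have x1: "x > 1" using x by simp
    obtain z where z: "1 < z" "z < x" "x powr (-m) - 1 powr (-m) = (x - 1) * ((-m) * z powr (-m - 1))"
      using MVT2[of 1 x "\<lambda>y. y powr (-m)" "\<lambda>y. (-m) * y powr (-m - 1)"] x1 D by force
    have "z powr (-m - 1) < 1"
      using z m powr_less_mono2_neg[of "-m-1" 1 z] by simp
    then have "(x - 1) * (m * z powr (-m - 1)) < (x - 1) * m" using x1 m by simp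
    then show ?thesis using z by (simp add: algebra_simps)
  qed
qed

lemma min_lemma:
  fixes A B m s :: real
  assumes A: "A > 0" and B: "B > 0" and m: "m > 0" and s: "s > 0"
  defines "r0 \<equiv> (m * B / A) powr (1 / (m + 1))"
  shows "r0 > 0" "A * r0 + B * r0 powr (-m) = A * r0 * (1 + 1/m)"
    "s \<noteq> r0 \<Longrightarrow> A * s + B * s powr (-m) > A * r0 * (1 + 1/m)"
proof -
  show r0: "r0 > 0" unfolding r0_def using A B m by simp
  have "r0 powr (m + 1) = m * B / A" unfolding r0_def using A B m
    by (simp add: powr_powr)
  moreover have "r0 powr (m + 1) = r0 * r0 powr m" using r0 by (simp add: powr_add)
  ultimately have "r0 powr m = m * B / (A * r0)" using r0 A by (metis nonzero_mult_div_cancel_left divide_divide_eq_left less_irrefl mult.commute)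
  then have key: "B * r0 powr (-m) = A * r0 / m" using r0 A B m by (simp add: powr_minus field_simps)
  then show "A * r0 + B * r0 powr (-m) = A * r0 * (1 + 1/m)" by (simp add: algebra_simps)
  assume ne: "s \<noteq> r0"
  define x where "x = s / r0"
  have x: "x > 0" "x \<noteq> 1" using r0 s ne unfolding x_def by auto
  have sx: "s = r0 * x" unfolding x_def using r0 by simp
  have "B * s powr (-m) = B * r0 powr (-m) * x powr (-m)" using r0 x sx by (simp add: powr_mult)
  also have "\<dots> = A * r0 / m * x powr (-m)" using key by simp
  also have "\<dots> > A * r0 / m * (1 - m * (x - 1))"
    using bern_strict[OF m x] A r0 m by (intro mult_strict_left_mono) auto
  finally have "B * s powr (-m) > A * r0 / m * (1 - m * (x - 1))" .
  moreover have "A * r0 / m * (1 - m * (x - 1)) = A * r0 / m - A * s + A * r0"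
    using m sx by (simp add: field_simps)
  ultimately show "A * s + B * s powr (-m) > A * r0 * (1 + 1/m)" by (simp add: algebra_simps)
qed

theorem lemma2p4:
  fixes l1 l2 l3 p C4 Cp a :: real
  assumes "2 < p" and "p < 10/3" and "l3 < 0"
    and "Lam l1 l2 > 0"
    and "C4 > 0" and "Cp > 0"
    and "a > 0"
  shows "(\<exists>!r. r > 0 \<and> (\<forall>s>0. gfun (Lam l1 l2) C4 Cp l3 p a s \<le> gfun (Lam l1 l2) C4 Cp l3 p a r))
    \<and> (a < abar (Lam l1 l2) C4 Cp l3 p \<longrightarrow> (SUP r\<in>{0<..}. gfun (Lam l1 l2) C4 Cp l3 p a r) > 0)
    \<and> (a = abar (Lam l1 l2) C4 Cp l3 p \<longrightarrow> (SUP r\<in>{0<..}. gfun (Lam l1 l2) C4 Cp l3 p a r) = 0)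
    \<and> (a > abar (Lam l1 l2) C4 Cp l3 p \<longrightarrow> (SUP r\<in>{0<..}. gfun (Lam l1 l2) C4 Cp l3 p a r) < 0)"
proof -
  note p1 = assms(1) and p2 = assms(2) and l3 = assms(3) and C4 = assms(5) and Cp = assms(6) and a = assms(7)
  define L where "L = Lam l1 l2"
  have L: "L > 0" using assms(4) L_def by simp
  define g where "g = gfun L C4 Cp l3 p a"
  define m where "m = (10 - 3*p)/2"
  define s where "s = m + 1"
  define e where "e = (6 - p)/2"
  define M where "M = L * C4^4"
  define D where "D = Cp powr p * \<bar>l3\<bar> / p"
  define A where "A = M / 2 * a"
  define B where "B = 2 * D * a powr e"
  have m: "m > 0" using p1 p2 by (auto simp: m_def)
  have s: "s > 0" "s = 3 - 3*(p-2)/2" using m p1 p2 unfolding s_def m_def by (auto simp: field_simps)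
  have M: "M > 0" using L C4 by (simp add: M_def)
  have D: "D > 0" unfolding D_def using Cp l3 p1 by (intro divide_pos_pos mult_pos_pos) auto
  have A: "A > 0" using M a by (simp add: A_def)
  have B: "B > 0" using D a by (simp add: B_def)
  have pg: "p * gam p = 3*(p-2)/2" using p1 by (simp add: gam_def field_simps)
  have pe: "p * (1 - gam p) = e" using p1 by (simp add: gam_def e_def field_simps)
  have gdef: "\<And>r. g r = 1/2 - (A * r + B * r powr (-m))"
  proof -
    fix r
    have h: "p * gam p - 2 = -m" using pg by (simp add: m_def field_simps)
    show "g r = 1/2 - (A * r + B * r powr (-m))"
      unfolding g_def gfun_def pe h unfolding A_def B_def M_def D_def by (simp add: algebra_simps)
  qed
  define r0 where "r0 = (m * B / A) powr (1 / (m + 1))"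
  define V where "V = 1/2 - A * r0 * (1 + 1/m)"
  have r0: "r0 > 0" and gr0: "g r0 = V"
    using min_lemma(1,2)[OF A B m(1) A] by (simp_all add: r0_def V_def gdef)
  have less: "\<And>r. r > 0 \<Longrightarrow> r \<noteq> r0 \<Longrightarrow> g r < V"
  proof -
    fix r assume "r > 0" "r \<noteq> r0"
    then show "g r < V" using min_lemma(3)[OF A B m(1), of r] unfolding r0_def V_def gdef by linarith
  qed
  have le: "\<And>r. r > 0 \<Longrightarrow> g r \<le> V"
    using less gr0 by (metis order_le_less)
  have uniq: "\<exists>!r. r > 0 \<and> (\<forall>s>0. g s \<le> g r)"
  proof (rule ex1I[of _ r0])
    show "r0 > 0 \<and> (\<forall>s>0. g s \<le> g r0)" using r0 le gr0 by simp
    fix r assume "r > 0 \<and> (\<forall>s>0. g s \<le> g r)"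
    then show "r = r0" using less[of r] r0 gr0 by force
  qed
  have sup: "(SUP r\<in>{0<..}. g r) = V"
    by (rule cSup_eq_maximum) (use r0 gr0 le in auto)
  have ln4: "ln (4::real) = 2 * ln 2"
    using ln_realpow[of 2 2] by simp
  define X where "X = (m/s) * ln M + (1/s) * ln D + (1/s) * ln m + (2/s - 1) * ln 2"
  have ex1: "(t - 2) / (t - 3) = m / s" "1 / (3 - t) = 1 / s" "(t - 2) / (3 - t) = - m / s"
    if "t = 3*(p-2)/2" for t
  proof -
    have h: "t - 2 = -m" "t - 3 = -s" "3 - t = s" using that s s_def by auto
    show "(t - 2) / (t - 3) = m / s" "1 / (3 - t) = 1 / s" "(t - 2) / (3 - t) = - m / s"
      unfolding h by auto
  qed
  have aexp: "alpha L C4 Cp l3 p = 1/2 * M powr (m/s) * (4*m*D) powr (1/s) + 2 * D powr (1/s) * (4*m/M) powr (-m/s)"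
  proof -
    have h1: "4 * \<bar>l3\<bar> * m * Cp powr p / p = 4*m*D"
      unfolding D_def by (simp add: field_simps)
    have h2: "2 - p * gam p = m" unfolding pg m_def by (simp add: field_simps)
    show ?thesis unfolding alpha_def ex1[OF pg] M_def[symmetric] h2 D_def[symmetric]
      by (simp add: h1)
  qed
  have T1: "1/2 * M powr (m/s) * (4*m*D) powr (1/s) = exp X"
  proof -
    have "ln (1/2 * M powr (m/s) * (4*m*D) powr (1/s)) = ln (1/2 * M powr (m/s)) + ln ((4*m*D) powr (1/s))"
      using M D m by (intro ln_mult_pos) auto
    also have "ln (1/2 * M powr (m/s)) = ln (1/2) + ln (M powr (m/s))"
      using M by (intro ln_mult_pos) auto
    also have "ln (1/2::real) = - ln 2" by (simp add: ln_div)
    also have "ln ((4*m*D) powr (1/s)) = (1/s) * (ln 4 + ln m + ln D)"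
      using M D m by (simp add: ln_powr ln_mult)
    also have "ln (M powr (m/s)) = (m/s) * ln M" using M by (simp add: ln_powr)
    finally have "ln (1/2 * M powr (m/s) * (4*m*D) powr (1/s)) = X"
      unfolding ln4 X_def by (simp add: algebra_simps diff_divide_distrib add_divide_distrib)
    moreover have "1/2 * M powr (m/s) * (4*m*D) powr (1/s) > 0" using M D m by simp
    ultimately show ?thesis using exp_ln by metis
  qed
  have T2: "2 * D powr (1/s) * (4*m/M) powr (-m/s) = exp X / m"
  proof -
    have c1: "-m/s = 1/s - 1" "m/s = 1 - 1/s" using s_def m by (auto simp: field_simps)
    have "ln (2 * D powr (1/s) * (4*m/M) powr (-m/s)) = ln 2 + ln (D powr (1/s)) + ln ((4*m/M) powr (-m/s))"
      using M D m by (simp add: ln_mult)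
    also have "\<dots> = ln 2 + (1/s) * ln D + (-m/s) * (ln 4 + ln m - ln M)"
      using M D m by (simp add: ln_powr ln_mult ln_div)
    also have "\<dots> = X - ln m"
      unfolding ln4 c1 X_def by (simp add: algebra_simps)
    finally have "ln (2 * D powr (1/s) * (4*m/M) powr (-m/s)) = X - ln m" .
    then have "2 * D powr (1/s) * (4*m/M) powr (-m/s) = exp (X - ln m)"
    proof -
      have "2 * D powr (1/s) * (4*m/M) powr (-m/s) > 0" using M D m by simp
      then show ?thesis using exp_ln \<open>ln (2 * D powr (1/s) * (4*m/M) powr (-m/s)) = X - ln m\<close> by metis
    qed
    then show ?thesis using m by (simp add: exp_diff)
  qed
  have LHS: "A * r0 = exp X * a powr (4/3)"
  proof -
    have ee: "e = 4/3 * s - m" unfolding e_def s_def m_def by (simp add: field_simps)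
    have sp: "s > 0" using s by simp
    have "ln (A * r0) = ln (M / 2 * a) + (1/s) * (ln m + (ln 2 + ln D + e * ln a) - ln (M / 2 * a))"
      unfolding A_def B_def r0_def s_def[symmetric]
      using M D m a sp by (simp add: ln_mult_pos ln_div ln_powr ln4)
    also have "ln (M / 2 * a) = ln M - ln 2 + ln a" using M a by (simp add: ln_mult_pos ln_div)
    finally have "ln (A * r0) = ln M - ln 2 + ln a + (1/s) * (ln m + (ln 2 + ln D + e * ln a) - (ln M - ln 2 + ln a))" .
    also have "\<dots> = X + (4/3) * ln a"
      unfolding ee X_def using sp apply (simp add: field_simps)
      using s_def by algebra
    finally have "ln (A * r0) = X + (4/3) * ln a" .
    then have "A * r0 = exp (X + (4/3) * ln a)" using A r0 exp_ln[of "A * r0"] by simp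
    then show ?thesis using a by (simp add: exp_add powr_def)
  qed
  have key: "A * r0 * (1 + 1/m) = alpha L C4 Cp l3 p * a powr (4/3)"
    unfolding LHS aexp T1 T2 using m by (simp add: field_simps)
  have al: "alpha L C4 Cp l3 p > 0"
  proof -
    have "A * r0 * (1 + 1/m) > 0" using A r0 m by (intro mult_pos_pos add_pos_pos) auto
    then show ?thesis using key a zero_less_mult_pos2[of "alpha L C4 Cp l3 p" "a powr (4/3)"] by simp
  qed
  have Vx: "V = 1/2 - alpha L C4 Cp l3 p * a powr (4/3)" using key V_def by simp
  define ab where "ab = abar L C4 Cp l3 p"
  have ab: "ab > 0" "ab powr (4/3) = 1 / (2 * alpha L C4 Cp l3 p)"
    using al by (simp_all add: ab_def abar_def powr_powr)
  have cmp: "a < ab \<longleftrightarrow> a powr (4/3) < ab powr (4/3)" "a = ab \<longleftrightarrow> a powr (4/3) = ab powr (4/3)"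
  proof -
    show "a < ab \<longleftrightarrow> a powr (4/3) < ab powr (4/3)"
      using a ab(1) powr_less_mono2[of "4/3" a ab] powr_mono2[of "4/3" ab a] by force
    show "a = ab \<longleftrightarrow> a powr (4/3) = ab powr (4/3)"
    proof
      assume h: "a powr (4/3) = ab powr (4/3)"
      have "(a powr (4/3)) powr (3/4) = (ab powr (4/3)) powr (3/4)" by (simp add: h)
      then show "a = ab" using a ab(1) by (simp add: powr_powr)
    qed simp
  qed
  have c1: "a < ab \<longleftrightarrow> V > 0" unfolding Vx cmp(1) ab(2) using al by (simp add: field_simps)
  have c2: "a = ab \<longleftrightarrow> V = 0" unfolding Vx cmp(2) ab(2) using al by (auto simp: field_simps)
  have c3: "a > ab \<longleftrightarrow> V < 0" using c1 c2 by linarith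
  show ?thesis using uniq sup c1 c2 c3 unfolding g_def L_def ab_def by simp
qed

end
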